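(* Let $(S,\Delta,\mathbb{P})$ be a probability space, $(U,d)$ a separable metric space, $\mathfrak{X}$ the set of $U$-valued random variables on $S$, $\mathcal{I}$ an ideal on $\mathbb{N}$, and $\underline{X}=\{X_n\}$ a sequence in $\mathfrak{X}$. If $\mathfrak{B}$ is a compact subset of $(\mathfrak{X}^0,\rho)$ such that $\{n\in\mathbb{N}:X_n\in\mathfrak{B}\}\notin\mathcal{I}$, then $\Gamma^{r^s}_{\underline{X}}(\mathcal{I}^{\mathbb{P}})\neq\varnothing$ for every $r>0$.
   Context: The Ky Fan metric is $\rho(X,Y)=\inf\{\varepsilon>0:\mathbb{P}(d(X,Y)>\varepsilon)\leq\varepsilon\}$; $\mathfrak{X}^0$ is the set of equivalence classes of $\mathfrak{X}$ under almost sure equality, on which $\rho$ is a metric. An ideal on $\mathbb{N}$ is a family $\mathcal{I}\subseteq\mathcal{P}(\mathbb{N})$ with $\varnothing\in\mathcal{I}$, closed under finite unions and under subsets. $\Gamma^{r^s}_{\underline{X}}(\mathcal{I}^{\mathbb{P}})$ (strong rough $\mathcal{I}$-cluster points in probability) is the set of $Y\in\mathfrak{X}$ with $\{n:\mathbb{P}(d(X_n,Y)<r+\varepsilon)>1-\delta\}\notin\mathcal{I}$ for all $\varepsilon,\delta>0$. *)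

theory Defs
  imports "HOL-Probability.Probability"
begin

definition is_ideal :: "nat set set \<Rightarrow> bool" where
  "is_ideal I \<longleftrightarrow> {} \<in> I \<and> (\<forall>A\<in>I. \<forall>B\<in>I. A \<union> B \<in> I) \<and> (\<forall>A\<in>I. \<forall>B. B \<subseteq> A \<longrightarrow> B \<in> I)"

definition rvs :: "'a measure \<Rightarrow> ('a \<Rightarrow> 'b::metric_space) set" where
  "rvs M = borel_measurable M"

text \<open>Ky Fan metric (a pseudometric on random variables, a metric on a.s.-classes).\<close>
definition kyfan :: "'a measure \<Rightarrow> ('a \<Rightarrow> 'b::metric_space) \<Rightarrow> ('a \<Rightarrow> 'b) \<Rightarrow> real" where
  "kyfan M X Y = Inf {e. e > 0 \<and> measure M {s \<in> space M. dist (X s) (Y s) > e} \<le> e}"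

text \<open>Open sets of the Ky Fan topology on random variables; these are unions of a.s.-classes,
  so they correspond exactly to the open sets of the metric space of classes.\<close>
definition kyfan_open :: "'a measure \<Rightarrow> ('a \<Rightarrow> 'b::metric_space) set \<Rightarrow> bool" where
  "kyfan_open M A \<longleftrightarrow> A \<subseteq> rvs M \<and>
     (\<forall>X\<in>A. \<exists>e>0. \<forall>Y\<in>rvs M. kyfan M X Y < e \<longrightarrow> Y \<in> A)"

text \<open>Compactness (open-cover definition) w.r.t. the Ky Fan topology; compactness of a set
  B of representatives is compactness of the set of its a.s.-classes in the quotient.\<close>
definition kyfan_compact :: "'a measure \<Rightarrow> ('a \<Rightarrow> 'b::metric_space) set \<Rightarrow> bool" where
  "kyfan_compact M B \<longleftrightarrow> B \<subseteq> rvs M \<and>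
     (\<forall>\<C>. (\<forall>C\<in>\<C>. kyfan_open M C) \<and> B \<subseteq> \<Union>\<C> \<longrightarrow>
        (\<exists>\<F>\<subseteq>\<C>. finite \<F> \<and> B \<subseteq> \<Union>\<F>))"

definition strong_rough_I_cluster ::
  "'a measure \<Rightarrow> nat set set \<Rightarrow> real \<Rightarrow> (nat \<Rightarrow> 'a \<Rightarrow> 'b::metric_space) \<Rightarrow> ('a \<Rightarrow> 'b) set" where
  "strong_rough_I_cluster M I r X = {Y \<in> rvs M. \<forall>\<epsilon>>0. \<forall>\<delta>>0.
     {n. measure M {s \<in> space M. dist (X n s) (Y s) < r + \<epsilon>} > 1 - \<delta>} \<notin> I}"

end

theory Submission imports Defs begin

lemma dist_meas:
  fixes X Y :: "'a \<Rightarrow> 'b::metric_space" and D :: "'b set"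
  assumes D: "countable D" "closure D = UNIV"
    and X: "X \<in> borel_measurable M" and Y: "Y \<in> borel_measurable M"
  shows "(\<lambda>s. dist (X s) (Y s)) \<in> borel_measurable M"
  unfolding borel_measurable_iff_less
proof
  fix c :: real
  have eq: "{w \<in> space M. dist (X w) (Y w) < c} =
    (\<Union>q\<in>D. \<Union>a\<in>\<rat>. \<Union>b\<in>\<rat>. if a + b < c then
        (X -` ball q a \<inter> space M) \<inter> (Y -` ball q b \<inter> space M) else {})"
  proof (rule set_eqI, rule iffI)
    fix w assume w: "w \<in> {w \<in> space M. dist (X w) (Y w) < c}"
    define d where "d = dist (X w) (Y w)"
    define t where "t = (c - d) / 4"
    have t: "t > 0" using w by (auto simp: d_def t_def)
    have "X w \<in> closure D" using D by simp
    then obtain q where q: "q \<in> D" "dist q (X w) < t" using t closure_approachable by metis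
    obtain a where a: "a \<in> \<rat>" "dist q (X w) < a" "a < t" using Rats_dense_in_real q(2) by blast
    obtain b where b: "b \<in> \<rat>" "d + t < b" "b < d + 2*t" using Rats_dense_in_real[of "d+t" "d+2*t"] t by auto
    have "dist q (Y w) \<le> dist q (X w) + d" unfolding d_def by (rule dist_triangle)
    then have yb: "dist q (Y w) < b" using b q by linarith
    have t4: "c = d + 4*t" unfolding t_def by (simp add: field_simps)
    have "a + b < c" using a b t t4 by linarith
    with yb w have "w \<in> (if a + b < c then
        (X -` ball q a \<inter> space M) \<inter> (Y -` ball q b \<inter> space M) else {})" using a by auto
    then show "w \<in> (\<Union>q\<in>D. \<Union>a\<in>\<rat>. \<Union>b\<in>\<rat>. if a + b < c then
        (X -` ball q a \<inter> space M) \<inter> (Y -` ball q b \<inter> space M) else {})"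
      using q(1) a(1) b(1) by blast
  next
    fix w assume "w \<in> (\<Union>q\<in>D. \<Union>a\<in>\<rat>. \<Union>b\<in>\<rat>. if a + b < c then
        (X -` ball q a \<inter> space M) \<inter> (Y -` ball q b \<inter> space M) else {})"
    then obtain q a b where "a + b < c" "w \<in> space M" "dist q (X w) < a" "dist q (Y w) < b"
      by (auto split: if_splits)
    moreover have "dist (X w) (Y w) \<le> dist q (X w) + dist q (Y w)" by (rule dist_triangle3)
    ultimately show "w \<in> {w \<in> space M. dist (X w) (Y w) < c}" by auto
  qed
  have mX: "\<And>q a. X -` ball q a \<inter> space M \<in> sets M" using X by (simp add: measurable_sets)
  have mY: "\<And>q a. Y -` ball q a \<inter> space M \<in> sets M" using Y by (simp add: measurable_sets)
  show "{w \<in> space M. dist (X w) (Y w) < c} \<in> sets M"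
    unfolding eq using D(1) countable_rat mX mY
    by (intro sets.countable_UN'' sets.countable_UN'' ) auto
qed


lemma ideal_UN:
  assumes "is_ideal I" "finite F" "\<And>Y. Y \<in> F \<Longrightarrow> A Y \<in> I"
  shows "(\<Union>Y\<in>F. A Y) \<in> I"
  using assms(2,3)
proof (induction F rule: finite_induct)
  case empty then show ?case using assms(1) by (simp add: is_ideal_def)
next
  case (insert x F) then show ?case using assms(1) unfolding is_ideal_def by simp
qed

theorem proposition3p9:
  fixes M :: "'a measure" and I :: "nat set set" and X :: "nat \<Rightarrow> 'a \<Rightarrow> 'b::metric_space"
    and B :: "('a \<Rightarrow> 'b) set" and r :: real
  assumes "prob_space M"
    and "\<exists>D::'b set. countable D \<and> closure D = UNIV"
    and "is_ideal I"
    and "\<And>n. X n \<in> rvs M"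
    and "kyfan_compact M B"
    and "{n. \<exists>Y\<in>B. AE s in M. X n s = Y s} \<notin> I"
    and "r > 0"
  shows "strong_rough_I_cluster M I r X \<noteq> {}"
proof
  assume empty: "strong_rough_I_cluster M I r X = {}"
  interpret prob_space M by fact
  obtain D :: "'b set" where D: "countable D" "closure D = UNIV" using assms(2) by blast
  have meas: "(\<lambda>s. dist (Y s) (Z s)) \<in> borel_measurable M" if "Y \<in> rvs M" "Z \<in> rvs M" for Y Z :: "'a \<Rightarrow> 'b"
    using that unfolding rvs_def by (intro dist_meas[OF D]) auto
  have mgt: "{s \<in> space M. a < dist (Y s) (Z s)} \<in> sets M" if "Y \<in> rvs M" "Z \<in> rvs M" for Y Z :: "'a \<Rightarrow> 'b" and a
    using meas[OF that] unfolding borel_measurable_iff_greater by blast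
  have mlt: "{s \<in> space M. dist (Y s) (Z s) < a} \<in> sets M" if "Y \<in> rvs M" "Z \<in> rvs M" for Y Z :: "'a \<Rightarrow> 'b" and a
    using meas[OF that] unfolding borel_measurable_iff_less by blast
  have tri: "measure M {s \<in> space M. a + b < dist (Y s) (W s)} \<le> a + b"
    if "Y \<in> rvs M" "Z \<in> rvs M" "W \<in> rvs M"
      "measure M {s \<in> space M. a < dist (Y s) (Z s)} \<le> a"
      "measure M {s \<in> space M. b < dist (Z s) (W s)} \<le> b" for Y Z W :: "'a \<Rightarrow> 'b" and a b
  proof -
    have "{s \<in> space M. a + b < dist (Y s) (W s)} \<subseteq>
       {s \<in> space M. a < dist (Y s) (Z s)} \<union> {s \<in> space M. b < dist (Z s) (W s)}"
    proof
      fix s assume "s \<in> {s \<in> space M. a + b < dist (Y s) (W s)}"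
      moreover have "dist (Y s) (W s) \<le> dist (Y s) (Z s) + dist (Z s) (W s)" by (rule dist_triangle)
      ultimately show "s \<in> {s \<in> space M. a < dist (Y s) (Z s)} \<union> {s \<in> space M. b < dist (Z s) (W s)}"
        by auto
    qed
    then have "measure M {s \<in> space M. a + b < dist (Y s) (W s)} \<le>
       measure M ({s \<in> space M. a < dist (Y s) (Z s)} \<union> {s \<in> space M. b < dist (Z s) (W s)})"
      using mgt that by (intro finite_measure_mono) auto
    also have "\<dots> \<le> measure M {s \<in> space M. a < dist (Y s) (Z s)} + measure M {s \<in> space M. b < dist (Z s) (W s)}"
      using mgt that by (intro measure_Un_le) auto
    finally show ?thesis using that by linarith
  qed
  have kf: "\<exists>b. 0 < b \<and> b < e \<and> measure M {s \<in> space M. b < dist (Z s) (W s)} \<le> b"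
    if "kyfan M Z W < e" for Z W :: "'a \<Rightarrow> 'b" and e
  proof -
    let ?S = "{e. e > 0 \<and> measure M {s \<in> space M. dist (Z s) (W s) > e} \<le> e}"
    have "1 \<in> ?S" by simp
    then have "?S \<noteq> {}" by blast
    from cInf_lessD[OF this] that obtain b where "b \<in> ?S" "b < e" unfolding kyfan_def by blast
    then show ?thesis by auto
  qed
  have Brvs: "B \<subseteq> rvs M" using assms(5) unfolding kyfan_compact_def by blast
  have "\<forall>Y\<in>B. \<exists>ep>0. \<exists>de>0.
      {n. measure M {s \<in> space M. dist (X n s) (Y s) < r + ep} > 1 - de} \<in> I"
  proof
    fix Y assume "Y \<in> B"
    then have "Y \<in> rvs M" using Brvs by blast
    then show "\<exists>ep>0. \<exists>de>0. {n. measure M {s \<in> space M. dist (X n s) (Y s) < r + ep} > 1 - de} \<in> I"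
      using empty unfolding strong_rough_I_cluster_def by blast
  qed
  then have "\<exists>ep. \<forall>Y\<in>B. ep Y > 0 \<and> (\<exists>de>0.
      {n. measure M {s \<in> space M. dist (X n s) (Y s) < r + ep Y} > 1 - de} \<in> I)"
    by (rule bchoice)
  then obtain ep where ep: "\<forall>Y\<in>B. ep Y > 0 \<and> (\<exists>de>0.
      {n. measure M {s \<in> space M. dist (X n s) (Y s) < r + ep Y} > 1 - de} \<in> I)" by (elim exE)
  then have "\<forall>Y\<in>B. \<exists>de. de > 0 \<and>
      {n. measure M {s \<in> space M. dist (X n s) (Y s) < r + ep Y} > 1 - de} \<in> I" by blast
  then have "\<exists>de. \<forall>Y\<in>B. de Y > 0 \<and>
      {n. measure M {s \<in> space M. dist (X n s) (Y s) < r + ep Y} > 1 - de Y} \<in> I"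
    by (rule bchoice)
  then obtain de where de: "\<forall>Y\<in>B. de Y > 0 \<and>
      {n. measure M {s \<in> space M. dist (X n s) (Y s) < r + ep Y} > 1 - de Y} \<in> I" by (elim exE)
  have epde: "ep Y > 0 \<and> de Y > 0 \<and>
      {n. measure M {s \<in> space M. dist (X n s) (Y s) < r + ep Y} > 1 - de Y} \<in> I" if "Y \<in> B" for Y
    using ep de that by blast
  define A where "A Y = {n. measure M {s \<in> space M. dist (X n s) (Y s) < r + ep Y} > 1 - de Y}" for Y
  define eta where "eta Y = min r (de Y)" for Y
  define C where "C Y = {Z \<in> rvs M. \<exists>a>0. a < eta Y \<and>
      measure M {s \<in> space M. a < dist (Y s) (Z s)} \<le> a}" for Y
  have Copen: "kyfan_open M (C Y)" if "Y \<in> B" for Y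
    unfolding kyfan_open_def
  proof (intro conjI ballI)
    show "C Y \<subseteq> rvs M" unfolding C_def by blast
    fix Z assume "Z \<in> C Y"
    then obtain a where a: "Z \<in> rvs M" "a > 0" "a < eta Y"
      "measure M {s \<in> space M. a < dist (Y s) (Z s)} \<le> a" unfolding C_def by blast
    show "\<exists>e>0. \<forall>W\<in>rvs M. kyfan M Z W < e \<longrightarrow> W \<in> C Y"
    proof (intro exI[of _ "eta Y - a"] conjI ballI impI)
      show "eta Y - a > 0" using a by simp
      fix W assume W: "W \<in> rvs M" "kyfan M Z W < eta Y - a"
      obtain b where b: "0 < b" "b < eta Y - a" "measure M {s \<in> space M. b < dist (Z s) (W s)} \<le> b"
        using kf[OF W(2)] by blast
      have "measure M {s \<in> space M. a + b < dist (Y s) (W s)} \<le> a + b"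
        using tri[of Y Z W a b] a(1,4) b(3) W(1) subsetD[OF Brvs that] by blast
      then show "W \<in> C Y" unfolding C_def using W a b by (intro CollectI conjI exI[of _ "a+b"]) auto
    qed
  qed
  have YC: "Y \<in> C Y" if "Y \<in> B" for Y
  proof -
    have "eta Y > 0" using epde[OF that] assms(7) unfolding eta_def by simp
    then show ?thesis unfolding C_def using that Brvs
      by (intro CollectI conjI exI[of _ "eta Y / 2"]) auto
  qed
  have cc: "(\<forall>Cc\<in>C ` B. kyfan_open M Cc) \<and> B \<subseteq> \<Union>(C ` B)" using Copen YC by blast
  have "\<forall>\<C>. (\<forall>Cc\<in>\<C>. kyfan_open M Cc) \<and> B \<subseteq> \<Union>\<C> \<longrightarrow>
        (\<exists>\<F>\<subseteq>\<C>. finite \<F> \<and> B \<subseteq> \<Union>\<F>)"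
    using assms(5) unfolding kyfan_compact_def by (elim conjE)
  from mp[OF spec[OF this, of "C ` B"] cc] obtain F where F: "F \<subseteq> C ` B" "finite F" "B \<subseteq> \<Union>F"
    by (elim exE conjE)
  obtain F' where F': "F' \<subseteq> B" "finite F'" "F = C ` F'" using finite_subset_image[OF F(2,1)] by blast
  have key: "{n. \<exists>Y\<in>B. AE s in M. X n s = Y s} \<subseteq> (\<Union>Y\<in>F'. A Y)"
  proof
    fix n assume "n \<in> {n. \<exists>Y\<in>B. AE s in M. X n s = Y s}"
    then obtain Z where Z: "Z \<in> B" "AE s in M. X n s = Z s" by blast
    then obtain Y where Y: "Y \<in> F'" "Z \<in> C Y" using F F' by blast
    have YB: "Y \<in> B" using Y F' by blast
    then have Yr: "Y \<in> rvs M" using Brvs by blast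
    have Zr: "Z \<in> rvs M" using Z Brvs by blast
    have Xr: "X n \<in> rvs M" by (rule assms(4))
    obtain a where a: "a > 0" "a < eta Y" "measure M {s \<in> space M. a < dist (Y s) (Z s)} \<le> a"
      using Y(2) unfolding C_def by blast
    have "measure M {s \<in> space M. a < dist (Y s) (X n s)} = measure M {s \<in> space M. a < dist (Y s) (Z s)}"
      by (rule measure_eq_AE) (use Z(2) mgt[OF Yr Xr] mgt[OF Yr Zr] in \<open>auto elim!: AE_mp\<close>)
    then have le: "measure M {s \<in> space M. a < dist (Y s) (X n s)} \<le> a" using a by simp
    have "space M - {s \<in> space M. a < dist (Y s) (X n s)} \<subseteq> {s \<in> space M. dist (X n s) (Y s) < r + ep Y}"
      using a epde[OF YB] unfolding eta_def by (auto simp: dist_commute)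
    then have "measure M (space M - {s \<in> space M. a < dist (Y s) (X n s)}) \<le>
        measure M {s \<in> space M. dist (X n s) (Y s) < r + ep Y}"
      using mlt[OF Xr Yr] by (intro finite_measure_mono) auto
    moreover have "measure M (space M - {s \<in> space M. a < dist (Y s) (X n s)}) =
       1 - measure M {s \<in> space M. a < dist (Y s) (X n s)}"
      using mgt[OF Yr Xr] by (intro prob_compl) auto
    moreover have "a < de Y" using a unfolding eta_def by simp
    ultimately have "n \<in> A Y" unfolding A_def using le by simp
    then show "n \<in> (\<Union>Y\<in>F'. A Y)" using Y by blast
  qed
  have AI: "(\<Union>Y\<in>F'. A Y) \<in> I"
  proof (rule ideal_UN[OF assms(3) F'(2)])
    fix Y assume "Y \<in> F'"
    then have "Y \<in> B" using F'(1) by blast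
    from epde[OF this] show "A Y \<in> I" unfolding A_def by (elim conjE)
  qed
  have sub: "\<forall>A\<in>I. \<forall>B. B \<subseteq> A \<longrightarrow> B \<in> I" using assms(3) unfolding is_ideal_def by (elim conjE)
  have "{n. \<exists>Y\<in>B. AE s in M. X n s = Y s} \<in> I"
    using mp[OF spec[OF bspec[OF sub AI]] key] .
  then show False using assms(6) by blast
qed

end
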